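(* There exists an infinite strictly increasing sequence $\langle e_n : n\in\omega\rangle$ of natural numbers such that $W_{e_n}=\{e_m : m>n\}$ for every $n\in\omega$, and such that the sequence $\langle e_n:n\in\omega\rangle$ is not computable.
   Context: $\omega$ denotes the set of natural numbers $\{0,1,2,\dots\}$. $\langle \psi_e : e\in\omega\rangle$ is a standard (acceptable, in the sense of Rogers) computable numbering of all partial computable functions from $\omega$ to $\omega$, and $W_e$ denotes the domain of $\psi_e$, so $\langle W_e:e\in\omega\rangle$ is a uniform listing of all computably enumerable subsets of $\omega$. *)

theory Defs
  imports Main "HOL-Library.Nat_Bijection"
begin

text \<open>Cn n f gs: composition of f with gs, all gs of arity n;
  Pr n f g: primitive recursion (arity n+1, recursion on the first argument);
  Mn n f: unbounded minimisation (arity n, search over the first argument of f).\<close>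

datatype recf = Z | S | Id nat nat | Cn nat recf "recf list" | Pr nat recf recf | Mn nat recf

inductive eval :: "recf \<Rightarrow> nat list \<Rightarrow> nat \<Rightarrow> bool" where
  eval_Z: "eval Z xs 0"
| eval_S: "eval S [x] (Suc x)"
| eval_Id: "k < n \<Longrightarrow> length xs = n \<Longrightarrow> eval (Id n k) xs (xs ! k)"
| eval_Cn: "length xs = n \<Longrightarrow> list_all2 (\<lambda>g y. eval g xs y) gs ys \<Longrightarrow> eval f ys z
    \<Longrightarrow> eval (Cn n f gs) xs z"
| eval_Pr0: "length xs = n \<Longrightarrow> eval f xs y \<Longrightarrow> eval (Pr n f g) (0 # xs) y"
| eval_PrS: "length xs = n \<Longrightarrow> eval (Pr n f g) (k # xs) y \<Longrightarrow> eval g (k # y # xs) z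
    \<Longrightarrow> eval (Pr n f g) (Suc k # xs) z"
| eval_Mn: "length xs = n \<Longrightarrow> eval f (y # xs) 0 \<Longrightarrow> (\<forall>z<y. \<exists>v. eval f (z # xs) (Suc v))
    \<Longrightarrow> eval (Mn n f) xs y"

fun enc :: "recf \<Rightarrow> nat" where
  "enc Z = prod_encode (0, 0)"
| "enc S = prod_encode (1, 0)"
| "enc (Id n k) = prod_encode (2, prod_encode (n, k))"
| "enc (Cn n f gs) = prod_encode (3, prod_encode (n, prod_encode (enc f, list_encode (map enc gs))))"
| "enc (Pr n f g) = prod_encode (4, prod_encode (n, prod_encode (enc f, enc g)))"
| "enc (Mn n f) = prod_encode (5, prod_encode (n, enc f))"

text \<open>The standard numbering: psi e x = y iff e codes a program which on input [x]
  outputs y (non-codes give the empty function).\<close>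
definition psi :: "nat \<Rightarrow> nat \<Rightarrow> nat \<Rightarrow> bool" where
  "psi e x y \<longleftrightarrow> (\<exists>f. enc f = e \<and> eval f [x] y)"

definition W :: "nat \<Rightarrow> nat set" where
  "W e = {x. \<exists>y. psi e x y}"

definition computable :: "(nat \<Rightarrow> nat) \<Rightarrow> bool" where
  "computable h \<longleftrightarrow> (\<exists>f. \<forall>n. eval f [n] (h n))"

end

theory Submission
  imports Defs "HOL-Library.Infinite_Set"
begin

inductive_cases evZE: "eval Z xs y"
inductive_cases evSE: "eval S xs y"
inductive_cases evIdE: "eval (Id n k) xs y"
inductive_cases evCnE: "eval (Cn n f gs) xs y"
inductive_cases evPrE: "eval (Pr n f g) xs y"
inductive_cases evMnE: "eval (Mn n f) xs y"

lemma eval_det: "eval f xs y \<Longrightarrow> eval f xs y' \<Longrightarrow> y = y'"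
proof (induction arbitrary: y' rule: eval.induct)
  case (eval_Z xs) then show ?case by (blast elim: evZE)
next
  case (eval_S x) then show ?case by (blast elim: evSE)
next
  case (eval_Id k n xs) then show ?case by (blast elim: evIdE)
next
  case (eval_Cn xs n gs ys f z)
  from eval_Cn.prems obtain ys' where a: "list_all2 (\<lambda>g y. eval g xs y) gs ys'" and b: "eval f ys' y'"
    by (rule evCnE) 
  have "ys = ys'"
    using eval_Cn.IH(1) a
  proof (induction arbitrary: ys' rule: list_all2_induct)
    case Nil then show ?case by simp
  next
    case (Cons g gs y ys) then show ?case by (cases ys') auto
  qed
  then show ?case using eval_Cn.IH(2) b by simp
next
  case (eval_Pr0 xs n f y g) from eval_Pr0.prems show ?case
    by (rule evPrE) (use eval_Pr0.IH in auto)
next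
  case (eval_PrS xs n f g k y z)
  from eval_PrS.prems show ?case
  proof (rule evPrE)
    fix xs' k' y1 assume "Suc k # xs = Suc k' # xs'" "eval (Pr n f g) (k' # xs') y1" "eval g (k' # y1 # xs') y'"
    then show ?thesis using eval_PrS.IH by auto
  qed auto
next
  case (eval_Mn xs n f y)
  from eval_Mn.prems have a: "eval f (y' # xs) 0" and b: "\<forall>z<y'. \<exists>v. eval f (z # xs) (Suc v)"
    by (blast elim: evMnE)+
  show ?case
  proof (rule ccontr)
    assume "y \<noteq> y'"
    then consider "y < y'" | "y' < y" by linarith
    then show False
    proof cases
      case 1 then obtain v where "eval f (y # xs) (Suc v)" using b by blast
      then show False using eval_Mn.IH(1) by fastforce
    next
      case 2 then obtain v where "eval f (y' # xs) (Suc v)" using eval_Mn.IH(2) by blast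
      then show False using eval_Mn.IH(2) a 2 by fastforce
    qed
  qed
qed

lemma enc_inj: "enc f = enc g \<Longrightarrow> f = g"
proof (induction f arbitrary: g)
  case (Cn n f gs)
  then show ?case
  proof (cases g)
    case (Cn n' f' gs')
    with Cn.prems have "n = n'" "enc f = enc f'" "list_encode (map enc gs) = list_encode (map enc gs')"
      by (auto simp: prod_encode_eq)
    moreover have "map enc gs = map enc gs'" using calculation(3) by (simp add: list_encode_eq)
    hence "gs = gs'" using Cn.IH(2)
    proof (induction gs arbitrary: gs')
      case Nil then show ?case by simp
    next
      case (Cons a gs) then show ?case by (cases gs') auto
    qed
    ultimately show ?thesis using Cn.IH(1) \<open>g = _\<close> by simp
  qed (auto simp: prod_encode_eq)
qed (case_tac g; auto simp: prod_encode_eq)+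



named_theorems prf_I

definition prfe :: "nat \<Rightarrow> ((nat \<Rightarrow> nat) \<Rightarrow> nat) \<Rightarrow> bool" where
  "prfe n h \<longleftrightarrow> (\<exists>F. \<forall>env. eval F (map env [0..<n]) (h env))"

definition prfp :: "nat \<Rightarrow> ((nat \<Rightarrow> nat) \<Rightarrow> bool) \<Rightarrow> bool" where
  "prfp n P \<longleftrightarrow> prfe n (\<lambda>e. of_bool (P e))"

lemma map_upt_Suc0: "map f [0..<Suc n] = f 0 # map (\<lambda>i. f (Suc i)) [0..<n]"
  by (induction n) auto

lemma prfe_cong: "prfe n h \<Longrightarrow> (\<And>e. h e = h' e) \<Longrightarrow> prfe n h'"
proof -
  assume "prfe n h" "\<And>e. h e = h' e"
  then have "h = h'" by auto
  with \<open>prfe n h\<close> show ?thesis by simp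
qed

primrec cnst :: "nat \<Rightarrow> recf" where
  "cnst 0 = Z" | "cnst (Suc c) = Cn 0 S [cnst c]"

lemma eval_cnst: "eval (cnst c) [] c"
  by (induction c) (auto intro!: eval.intros)

lemma prfe_const[prf_I]: "prfe n (\<lambda>e. c)"
  unfolding prfe_def
  by (rule exI[of _ "Cn n (cnst c) []"]) (auto intro!: eval.intros eval_cnst)

lemma prfe_proj[prf_I]: "k < n \<Longrightarrow> prfe n (\<lambda>e. e k)"
  unfolding prfe_def
proof (intro exI allI)
  fix env assume "k < n"
  have "eval (Id n k) (map env [0..<n]) (map env [0..<n] ! k)" by (rule eval_Id) (use \<open>k < n\<close> in auto)
  then show "eval (Id n k) (map env [0..<n]) (env k)" using \<open>k < n\<close> by simp
qed

lemma prfe_comp: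
  assumes "prfe m f" "\<forall>i<m. prfe n (gs i)"
  shows "prfe n (\<lambda>env. f (\<lambda>i. gs i env))"
proof -
  obtain Ff where Ff: "\<forall>env. eval Ff (map env [0..<m]) (f env)" using assms(1) unfolding prfe_def by blast
  have "\<forall>i<m. \<exists>G. \<forall>env. eval G (map env [0..<n]) (gs i env)" using assms(2) unfolding prfe_def by blast
  then obtain G where G: "\<forall>i<m. \<forall>env. eval (G i) (map env [0..<n]) (gs i env)" by metis
  show ?thesis unfolding prfe_def
  proof (intro exI allI)
    fix env
    have "list_all2 (\<lambda>g y. eval g (map env [0..<n]) y) (map G [0..<m]) (map (\<lambda>i. gs i env) [0..<m])"
      using G by (auto simp: list_all2_conv_all_nth)
    moreover have "eval Ff (map (\<lambda>i. gs i env) [0..<m]) (f (\<lambda>i. gs i env))" using Ff by blast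
    ultimately show "eval (Cn n Ff (map G [0..<m])) (map env [0..<n]) (f (\<lambda>i. gs i env))"
      by (intro eval_Cn) auto
  qed
qed

fun PR :: "((nat\<Rightarrow>nat)\<Rightarrow>nat) \<Rightarrow> ((nat\<Rightarrow>nat)\<Rightarrow>nat) \<Rightarrow> nat \<Rightarrow> (nat\<Rightarrow>nat) \<Rightarrow> nat" where
  "PR f g 0 env = f env"
| "PR f g (Suc k) env = g (case_nat k (case_nat (PR f g k env) env))"

lemma prfe_PR:
  assumes "prfe n f" "prfe (Suc (Suc n)) g"
  shows "prfe (Suc n) (\<lambda>env. PR f g (env 0) (\<lambda>i. env (Suc i)))"
proof -
  obtain Ff where Ff: "\<forall>env. eval Ff (map env [0..<n]) (f env)" using assms(1) unfolding prfe_def by blast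
  obtain Gg where Gg: "\<forall>env. eval Gg (map env [0..<Suc (Suc n)]) (g env)" using assms(2) unfolding prfe_def by blast
  have *: "eval (Pr n Ff Gg) (k # map e [0..<n]) (PR f g k e)" for k e
  proof (induction k)
    case 0 then show ?case using Ff by (auto intro: eval_Pr0)
  next
    case (Suc k)
    have "eval Gg (map (case_nat k (case_nat (PR f g k e) e)) [0..<Suc (Suc n)]) (PR f g (Suc k) e)"
      using Gg by (simp del: upt_Suc)
    moreover have "map (case_nat k (case_nat (PR f g k e) e)) [0..<Suc (Suc n)] = k # PR f g k e # map e [0..<n]"
      by (simp only: map_upt_Suc0 nat.case)
    ultimately have "eval Gg (k # PR f g k e # map e [0..<n]) (PR f g (Suc k) e)"
      by simp
    then show ?case using Suc by (intro eval_PrS) auto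
  qed
  show ?thesis unfolding prfe_def
    by (rule exI[of _ "Pr n Ff Gg"]) (use * in \<open>simp add: map_upt_Suc0 del: upt_Suc\<close>)
qed

lemma prfe_comp1: "prfe 1 (\<lambda>e. f (e 0)) \<Longrightarrow> prfe n a \<Longrightarrow> prfe n (\<lambda>e. f (a e))"
  using prfe_comp[of 1 "\<lambda>e. f (e 0)" n "\<lambda>i. a"] by simp

lemma prfe_comp2: "prfe 2 (\<lambda>e. f (e 0) (e 1)) \<Longrightarrow> prfe n a \<Longrightarrow> prfe n b \<Longrightarrow> prfe n (\<lambda>e. f (a e) (b e))"
  using prfe_comp[of 2 "\<lambda>e. f (e 0) (e 1)" n "\<lambda>i. [a,b] ! i"] by (simp add: less_Suc_eq numeral_2_eq_2)

lemma prfe_comp3: "prfe 3 (\<lambda>e. f (e 0) (e 1) (e 2)) \<Longrightarrow> prfe n a \<Longrightarrow> prfe n b \<Longrightarrow> prfe n c \<Longrightarrow>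
   prfe n (\<lambda>e. f (a e) (b e) (c e))"
  using prfe_comp[of 3 "\<lambda>e. f (e 0) (e 1) (e 2)" n "\<lambda>i. [a,b,c] ! i"]
  by (simp add: less_Suc_eq numeral_3_eq_3 numeral_2_eq_2)

lemma prfe_Suc1: "prfe 1 (\<lambda>e. Suc (e 0))"
  unfolding prfe_def by (rule exI[of _ S]) (auto intro: eval_S)

lemma prfe_Suc[prf_I]: "prfe n a \<Longrightarrow> prfe n (\<lambda>e. Suc (a e))"
  by (rule prfe_comp1[OF prfe_Suc1])

lemma prfe_add2: "prfe 2 (\<lambda>e. e 0 + e 1)"
proof -
  have "prfe (Suc (Suc 0)) (\<lambda>e. PR (\<lambda>e. e 0) (\<lambda>e. Suc (e 1)) (e 0) (\<lambda>i. e (Suc i)))"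
    by (rule prfe_PR) (intro prf_I | simp)+
  moreover have "PR (\<lambda>e. e 0) (\<lambda>e. Suc (e 1)) x e = x + e 0" for x e by (induction x) auto
  ultimately show ?thesis by (simp add: numeral_2_eq_2 prfe_cong)
qed

lemma prfe_add[prf_I]: "prfe n a \<Longrightarrow> prfe n b \<Longrightarrow> prfe n (\<lambda>e. a e + b e)"
  by (rule prfe_comp2[OF prfe_add2])

lemma prfe_mult2: "prfe 2 (\<lambda>e. e 0 * e 1)"
proof -
  have "prfe (Suc (Suc 0)) (\<lambda>e. PR (\<lambda>e. 0) (\<lambda>e. e 1 + e 2) (e 0) (\<lambda>i. e (Suc i)))"
    by (rule prfe_PR) (intro prf_I | simp)+
  moreover have "PR (\<lambda>e. 0) (\<lambda>e. e 1 + e 2) x e = x * e 0" for x e by (induction x) auto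
  ultimately show ?thesis by (simp add: numeral_2_eq_2 prfe_cong)
qed

lemma prfe_mult[prf_I]: "prfe n a \<Longrightarrow> prfe n b \<Longrightarrow> prfe n (\<lambda>e. a e * b e)"
  by (rule prfe_comp2[OF prfe_mult2])

lemma prfe_pred1: "prfe 1 (\<lambda>e. e 0 - 1)"
proof -
  have "prfe (Suc 0) (\<lambda>e. PR (\<lambda>e. 0) (\<lambda>e. e 0) (e 0) (\<lambda>i. e (Suc i)))"
    by (rule prfe_PR) (intro prf_I | simp)+
  moreover have "PR (\<lambda>e. 0) (\<lambda>e. e 0) x e = x - 1" for x e by (induction x) auto
  ultimately show ?thesis by (simp add: prfe_cong)
qed

lemma prfe_sub2: "prfe 2 (\<lambda>e. e 0 - e 1)"
proof -
  have "prfe (Suc (Suc 0)) (\<lambda>e. PR (\<lambda>e. e 0) (\<lambda>e. e 1 - 1) (e 0) (\<lambda>i. e (Suc i)))"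
    by (rule prfe_PR) (intro prf_I prfe_comp1[OF prfe_pred1] | simp)+
  moreover have "PR (\<lambda>e. e 0) (\<lambda>e. e 1 - 1) x e = e 0 - x" for x e by (induction x) auto
  ultimately have "prfe 2 (\<lambda>e. e 1 - e 0)" by (simp add: numeral_2_eq_2 prfe_cong)
  from prfe_comp2[OF this, of 2 "\<lambda>e. e 1" "\<lambda>e. e 0"] show ?thesis by (simp add: prfe_proj)
qed

lemma prfe_sub[prf_I]: "prfe n a \<Longrightarrow> prfe n b \<Longrightarrow> prfe n (\<lambda>e. a e - b e)"
  by (rule prfe_comp2[OF prfe_sub2])

lemma prfe_sum[prf_I]:
  assumes "prfe (Suc n) (\<lambda>e. h (e 0) (\<lambda>i. e (Suc i)))" "prfe n B"
  shows "prfe n (\<lambda>e. \<Sum>j<B e. h j e)"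
proof -
  have "\<forall>i<Suc n. prfe (Suc (Suc n)) (case_nat (\<lambda>e. e 0) (\<lambda>i e. e (Suc (Suc i))) i)"
    by (auto simp: less_Suc_eq_0_disj intro!: prfe_proj)
  from prfe_comp[OF assms(1) this]
  have g: "prfe (Suc (Suc n)) (\<lambda>e. h (e 0) (\<lambda>i. e (Suc (Suc i))))" by simp
  have "prfe (Suc n) (\<lambda>e. PR (\<lambda>e. 0) (\<lambda>e. e 1 + h (e 0) (\<lambda>i. e (Suc (Suc i)))) (e 0) (\<lambda>i. e (Suc i)))"
    by (intro prfe_PR prf_I g | simp)+
  moreover have "PR (\<lambda>e. 0) (\<lambda>e. e 1 + h (e 0) (\<lambda>i. e (Suc (Suc i)))) x e = (\<Sum>j<x. h j e)" for x e
    by (induction x) auto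
  ultimately have S: "prfe (Suc n) (\<lambda>e. \<Sum>j<e 0. h j (\<lambda>i. e (Suc i)))" by (rule prfe_cong)
  have "\<forall>i<Suc n. prfe n (case_nat B (\<lambda>i e. e i) i)"
    using assms(2) by (auto simp: less_Suc_eq_0_disj intro!: prfe_proj)
  from prfe_comp[OF S this] show ?thesis by simp
qed

lemma prfp_of_bool[prf_I]: "prfp n P \<Longrightarrow> prfe n (\<lambda>e. of_bool (P e))"
  by (simp add: prfp_def)

lemma prfe_if[prf_I]: "prfp n P \<Longrightarrow> prfe n a \<Longrightarrow> prfe n b \<Longrightarrow> prfe n (\<lambda>e. if P e then a e else b e)"
proof -
  assume "prfp n P" "prfe n a" "prfe n b"
  then have "prfe n (\<lambda>e. of_bool (P e) * a e + (1 - of_bool (P e)) * b e)"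
    by (intro prf_I | assumption | simp add: prfp_def)+
  then show ?thesis by (rule prfe_cong) simp
qed

lemma prfp_eq[prf_I]: "prfe n a \<Longrightarrow> prfe n b \<Longrightarrow> prfp n (\<lambda>e. a e = b e)"
  unfolding prfp_def by (rule prfe_cong[where h="\<lambda>e. 1 - ((a e - b e) + (b e - a e))"]) (intro prf_I | assumption | simp add: prfp_def)+

lemma prfp_less[prf_I]: "prfe n a \<Longrightarrow> prfe n b \<Longrightarrow> prfp n (\<lambda>e. a e < b e)"
  unfolding prfp_def by (rule prfe_cong[where h="\<lambda>e. 1 - (1 - (b e - a e))"]) (intro prf_I | assumption | simp add: prfp_def)+

lemma prfp_le[prf_I]: "prfe n a \<Longrightarrow> prfe n b \<Longrightarrow> prfp n (\<lambda>e. a e \<le> b e)"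
  unfolding prfp_def by (rule prfe_cong[where h="\<lambda>e. 1 - (a e - b e)"]) (intro prf_I | assumption | simp add: prfp_def)+

lemma prfp_not[prf_I]: "prfp n P \<Longrightarrow> prfp n (\<lambda>e. \<not> P e)"
  unfolding prfp_def by (rule prfe_cong[where h="\<lambda>e. 1 - of_bool (P e)"]) (intro prf_I | assumption | simp add: prfp_def)+

lemma prfp_and[prf_I]: "prfp n P \<Longrightarrow> prfp n Q \<Longrightarrow> prfp n (\<lambda>e. P e \<and> Q e)"
  unfolding prfp_def by (rule prfe_cong[where h="\<lambda>e. of_bool (P e) * of_bool (Q e)"]) (intro prf_I | assumption | simp add: prfp_def)+

lemma prfp_or[prf_I]: "prfp n P \<Longrightarrow> prfp n Q \<Longrightarrow> prfp n (\<lambda>e. P e \<or> Q e)"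
  unfolding prfp_def by (rule prfe_cong[where h="\<lambda>e. 1 - (1 - of_bool (P e)) * (1 - of_bool (Q e))"]) (intro prf_I | assumption | simp add: prfp_def)+

lemma prfp_imp[prf_I]: "prfp n P \<Longrightarrow> prfp n Q \<Longrightarrow> prfp n (\<lambda>e. P e \<longrightarrow> Q e)"
  unfolding prfp_def by (rule prfe_cong[where h="\<lambda>e. 1 - of_bool (P e) * (1 - of_bool (Q e))"]) (intro prf_I | assumption | simp add: prfp_def)+

lemma prfp_const[prf_I]: "prfp n (\<lambda>e. c)"
  unfolding prfp_def by (rule prfe_const)

lemma prfp_bex[prf_I]:
  assumes "prfp (Suc n) (\<lambda>e. P (e 0) (\<lambda>i. e (Suc i)))" "prfe n B"
  shows "prfp n (\<lambda>e. \<exists>j<B e. P j e)"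
proof -
  have "prfe n (\<lambda>e. 1 - (1 - (\<Sum>j<B e. of_bool (P j e))))"
    using assms by (intro prf_I | assumption | simp add: prfp_def)+
  moreover have "(1 - (1 - (\<Sum>j<B e. of_bool (P j e)))) = (of_bool (\<exists>j<B e. P j e) :: nat)" for e :: "nat \<Rightarrow> nat"
  proof (cases "\<exists>j<B e. P j e")
    case True
    then obtain j where "j < B e" "P j e" by blast
    then have "(\<Sum>j<B e. of_bool (P j e)) \<ge> (1::nat)"
      using member_le_sum[of j "{..<B e}" "\<lambda>j. of_bool (P j e) :: nat"] by auto
    then have "1 - (1 - (\<Sum>j<B e. of_bool (P j e))) = (1::nat)" by linarith
    then show ?thesis using True by simp
  qed auto
  ultimately show ?thesis unfolding prfp_def by (rule prfe_cong)
qed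

lemma prfp_ball[prf_I]:
  assumes "prfp (Suc n) (\<lambda>e. P (e 0) (\<lambda>i. e (Suc i)))" "prfe n B"
  shows "prfp n (\<lambda>e. \<forall>j<B e. P j e)"
proof -
  have "prfp n (\<lambda>e. \<not> (\<exists>j<B e. \<not> P j e))" by (intro prfp_not prfp_bex assms)
  then show ?thesis unfolding prfp_def by (rule prfe_cong) auto
qed



definition fstn :: "nat \<Rightarrow> nat" where "fstn c = fst (prod_decode c)"
definition sndn :: "nat \<Rightarrow> nat" where "sndn c = snd (prod_decode c)"
definition pe :: "nat \<Rightarrow> nat \<Rightarrow> nat" where "pe a b = prod_encode (a, b)"
definition consc :: "nat \<Rightarrow> nat \<Rightarrow> nat" where "consc x c = Suc (pe x c)"
definition hdc :: "nat \<Rightarrow> nat" where "hdc c = fstn (c - 1)"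
definition tlc :: "nat \<Rightarrow> nat" where "tlc c = sndn (c - 1)"
definition tli :: "nat \<Rightarrow> nat \<Rightarrow> nat" where "tli k c = (tlc ^^ k) c"
definition nthc :: "nat \<Rightarrow> nat \<Rightarrow> nat" where "nthc c i = hdc (tli i c)"
definition lenc :: "nat \<Rightarrow> nat" where "lenc c = (\<Sum>i<c. of_bool (tli i c \<noteq> 0))"

lemma fstn_pe[simp]: "fstn (pe a b) = a" and sndn_pe[simp]: "sndn (pe a b) = b"
  by (simp_all add: fstn_def sndn_def pe_def)
lemma pe_eq[simp]: "pe a b = pe a' b' \<longleftrightarrow> a = a' \<and> b = b'"
  by (simp add: pe_def)
lemma pe_fst_snd: "pe (fstn c) (sndn c) = c"
  by (simp add: fstn_def sndn_def pe_def)
lemma hdc_cons[simp]: "hdc (consc x c) = x" and tlc_cons[simp]: "tlc (consc x c) = c"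
  by (simp_all add: hdc_def tlc_def consc_def)
lemma list_encode_Cons: "list_encode (x # xs) = consc x (list_encode xs)"
  by (simp add: consc_def pe_def)
lemma tlc0: "tlc 0 = 0"
proof -
  have "prod_encode (0,0) = 0" by (simp add: prod_encode_def)
  hence "prod_decode 0 = (0,0)" by (metis prod_encode_inverse)
  then show ?thesis by (simp add: tlc_def sndn_def)
qed
lemma tli_Suc: "tli (Suc i) c = tli i (tlc c)"
  by (simp only: tli_def funpow_Suc_right comp_def)
lemma tli0: "tli i 0 = 0"
  by (induction i) (simp_all add: tli_Suc tlc0, simp add: tli_def)
lemma tli_enc: "tli i (list_encode xs) = list_encode (drop i xs)"
proof (induction i arbitrary: xs)
  case 0 then show ?case by (simp add: tli_def)
next
  case (Suc i)
  show ?case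
  proof (cases xs)
    case Nil then show ?thesis by (simp add: tli0)
  next
    case (Cons a list)
    then show ?thesis using Suc by (simp only: tli_Suc list_encode_Cons tlc_cons drop_Suc_Cons)
  qed
qed
lemma nthc_enc[simp]: "i < length xs \<Longrightarrow> nthc (list_encode xs) i = xs ! i"
  by (simp only: nthc_def tli_enc Cons_nth_drop_Suc[symmetric] list_encode_Cons hdc_cons)
lemma length_le_enc: "length xs \<le> list_encode xs"
proof (induction xs)
  case (Cons x xs)
  have "list_encode xs \<le> pe x (list_encode xs)" unfolding pe_def by (rule le_prod_encode_2)
  then show ?case using Cons by (simp add: pe_def)
qed simp
lemma lenc_enc[simp]: "lenc (list_encode xs) = length xs"
proof -
  have "(tli i (list_encode xs) \<noteq> 0) = (i < length xs)" for i
  proof -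
    have "(list_encode (drop i xs) = 0) = (drop i xs = [])"
      by (metis list_encode.simps(1) list_encode_eq)
    then show ?thesis by (simp add: tli_enc not_le)
  qed
  then have "lenc (list_encode xs) = (\<Sum>i<list_encode xs. of_bool (i < length xs))"
    by (simp add: lenc_def)
  also have "\<dots> = card {i. i < list_encode xs \<and> i < length xs}"
    by (simp add: sum.If_cases Int_def)
  also have "{i. i < list_encode xs \<and> i < length xs} = {..<length xs}"
    using length_le_enc[of xs] by auto
  finally show ?thesis by simp
qed
lemma enc_dec_nth: "nthc c i = list_decode c ! i" if "i < lenc c"
  using that nthc_enc[of i "list_decode c"] lenc_enc[of "list_decode c"] by simp
lemma enc_dec_len: "lenc c = length (list_decode c)"
  using lenc_enc[of "list_decode c"] by simp

lemma prfe_tri: "prfe 1 (\<lambda>e. triangle (e 0))"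
proof -
  have "prfe (Suc 0) (\<lambda>e. PR (\<lambda>e. 0) (\<lambda>e. e 1 + Suc (e 0)) (e 0) (\<lambda>i. e (Suc i)))"
    by (intro prfe_PR prf_I | simp)+
  moreover have "PR (\<lambda>e. 0) (\<lambda>e. e 1 + Suc (e 0)) x e = triangle x" for x e by (induction x) auto
  ultimately show ?thesis by (simp add: prfe_cong)
qed

lemma prfe_pe2: "prfe 2 (\<lambda>e. pe (e 0) (e 1))"
proof -
  have "prfe 2 (\<lambda>e. triangle (e 0 + e 1) + e 0)"
    by (intro prf_I prfe_comp1[OF prfe_tri] | simp)+
  then show ?thesis by (rule prfe_cong) (simp add: pe_def prod_encode_def)
qed

lemma prfe_pe[prf_I]: "prfe n a \<Longrightarrow> prfe n b \<Longrightarrow> prfe n (\<lambda>e. pe (a e) (b e))"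
  by (rule prfe_comp2[OF prfe_pe2])

lemma fstn_sum: "fstn c = (\<Sum>a<Suc c. if (\<exists>b<Suc c. pe a b = c) then a else 0)"
proof -
  have c: "c = pe (fstn c) (sndn c)" by (simp add: pe_fst_snd)
  have le1: "fstn c \<le> c" "sndn c \<le> c" using c le_prod_encode_1 le_prod_encode_2 pe_def by metis+
  have "(\<exists>b<Suc c. pe a b = c) = (a = fstn c)" if "a < Suc c" for a
    using le1 c by (metis fstn_pe le_imp_less_Suc)
  then have "(\<Sum>a<Suc c. if (\<exists>b<Suc c. pe a b = c) then a else 0) = (\<Sum>a<Suc c. if a = fstn c then a else 0)"
    by (intro sum.cong) auto
  also have "\<dots> = fstn c" using le1 by (simp add: sum.delta')
  finally show ?thesis by simp
qed

lemma sndn_sum: "sndn c = (\<Sum>b<Suc c. if (\<exists>a<Suc c. pe a b = c) then b else 0)"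
proof -
  have c: "c = pe (fstn c) (sndn c)" by (simp add: pe_fst_snd)
  have le1: "fstn c \<le> c" "sndn c \<le> c" using c le_prod_encode_1 le_prod_encode_2 pe_def by metis+
  have "(\<exists>a<Suc c. pe a b = c) = (b = sndn c)" if "b < Suc c" for b
    using le1 c by (metis sndn_pe le_imp_less_Suc)
  then have "(\<Sum>b<Suc c. if (\<exists>a<Suc c. pe a b = c) then b else 0) = (\<Sum>b<Suc c. if b = sndn c then b else 0)"
    by (intro sum.cong) auto
  also have "\<dots> = sndn c" using le1 by (simp add: sum.delta')
  finally show ?thesis by simp
qed

lemma prfe_fstn1: "prfe 1 (\<lambda>e. fstn (e 0))"
proof -
  have "prfe 1 (\<lambda>e. \<Sum>a<Suc (e 0). if (\<exists>b<Suc (e 0). pe a b = e 0) then a else 0)"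
    by (intro prf_I | simp)+
  then show ?thesis by (rule prfe_cong) (rule fstn_sum[symmetric])
qed

lemma prfe_sndn1: "prfe 1 (\<lambda>e. sndn (e 0))"
proof -
  have "prfe 1 (\<lambda>e. \<Sum>b<Suc (e 0). if (\<exists>a<Suc (e 0). pe a b = e 0) then b else 0)"
    by (intro prf_I | simp)+
  then show ?thesis by (rule prfe_cong) (rule sndn_sum[symmetric])
qed

lemma prfe_fstn[prf_I]: "prfe n a \<Longrightarrow> prfe n (\<lambda>e. fstn (a e))"
  by (rule prfe_comp1[OF prfe_fstn1])
lemma prfe_sndn[prf_I]: "prfe n a \<Longrightarrow> prfe n (\<lambda>e. sndn (a e))"
  by (rule prfe_comp1[OF prfe_sndn1])
lemma prfe_consc[prf_I]: "prfe n a \<Longrightarrow> prfe n b \<Longrightarrow> prfe n (\<lambda>e. consc (a e) (b e))"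
  unfolding consc_def by (intro prf_I)
lemma prfe_hdc[prf_I]: "prfe n a \<Longrightarrow> prfe n (\<lambda>e. hdc (a e))"
  unfolding hdc_def by (intro prf_I | simp)+
lemma prfe_tlc[prf_I]: "prfe n a \<Longrightarrow> prfe n (\<lambda>e. tlc (a e))"
  unfolding tlc_def by (intro prf_I | simp)+


lemma prfe_tli2: "prfe 2 (\<lambda>e. tli (e 0) (e 1))"
proof -
  have "prfe (Suc (Suc 0)) (\<lambda>e. PR (\<lambda>e. e 0) (\<lambda>e. tlc (e 1)) (e 0) (\<lambda>i. e (Suc i)))"
    by (intro prfe_PR prf_I | simp)+
  moreover have "PR (\<lambda>e. e 0) (\<lambda>e. tlc (e 1)) x e = tli x (e 0)" for x e
    by (induction x) (auto simp: tli_def)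
  ultimately show ?thesis by (simp add: numeral_2_eq_2 prfe_cong)
qed
lemma prfe_tli[prf_I]: "prfe n a \<Longrightarrow> prfe n b \<Longrightarrow> prfe n (\<lambda>e. tli (a e) (b e))"
  by (rule prfe_comp2[OF prfe_tli2])
lemma prfe_nthc[prf_I]: "prfe n a \<Longrightarrow> prfe n b \<Longrightarrow> prfe n (\<lambda>e. nthc (a e) (b e))"
  unfolding nthc_def by (intro prf_I)
lemma prfe_lenc1: "prfe 1 (\<lambda>e. lenc (e 0))"
  unfolding lenc_def by (intro prf_I | simp)+
lemma prfe_lenc[prf_I]: "prfe n a \<Longrightarrow> prfe n (\<lambda>e. lenc (a e))"
  by (rule prfe_comp1[OF prfe_lenc1])



definition ec :: "nat \<Rightarrow> nat" where "ec q = fstn (sndn q)"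
definition ex :: "nat \<Rightarrow> nat" where "ex q = fstn (sndn (sndn q))"
definition er :: "nat \<Rightarrow> nat" where "er q = fstn (sndn (sndn (sndn q)))"
definition ea :: "nat \<Rightarrow> nat" where "ea q = sndn (sndn (sndn (sndn q)))"
definition eve :: "nat \<Rightarrow> nat \<Rightarrow> nat \<Rightarrow> nat \<Rightarrow> nat" where "eve c x r a = pe 1 (pe c (pe x (pe r a)))"

lemma eve_simps[simp]: "fstn (eve c x r a) = 1" "ec (eve c x r a) = c" "ex (eve c x r a) = x"
  "er (eve c x r a) = r" "ea (eve c x r a) = a"
  by (simp_all add: eve_def ec_def ex_def er_def ea_def)

definition CE :: "nat set \<Rightarrow> nat \<Rightarrow> bool" where "CE T c \<longleftrightarrow> pe 0 c \<in> T"
definition EE :: "nat set \<Rightarrow> nat \<Rightarrow> nat \<Rightarrow> nat \<Rightarrow> bool" where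
  "EE T c x r \<longleftrightarrow> (\<exists>q\<in>T. fstn q = 1 \<and> ec q = c \<and> ex q = x \<and> er q = r)"
definition EEnz :: "nat set \<Rightarrow> nat \<Rightarrow> nat \<Rightarrow> bool" where
  "EEnz T c x \<longleftrightarrow> (\<exists>q\<in>T. fstn q = 1 \<and> ec q = c \<and> ex q = x \<and> er q \<noteq> 0)"
definition EEpr :: "nat set \<Rightarrow> nat \<Rightarrow> nat \<Rightarrow> nat \<Rightarrow> nat \<Rightarrow> bool" where
  "EEpr T c g x r \<longleftrightarrow> (\<exists>q\<in>T. fstn q = 1 \<and> ec q = c \<and> ex q = consc (hdc x - 1) (tlc x) \<and>
      EE T g (consc (hdc x - 1) (consc (er q) (tlc x))) r)"

definition codeok :: "nat set \<Rightarrow> nat \<Rightarrow> bool" where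
  "codeok T c \<longleftrightarrow>
   (c = pe 0 0) \<or> (c = pe 1 0) \<or> fstn c = 2 \<or>
   (fstn c = 3 \<and> CE T (fstn (sndn (sndn c))) \<and>
      (\<forall>j<lenc (sndn (sndn (sndn c))). CE T (nthc (sndn (sndn (sndn c))) j))) \<or>
   (fstn c = 4 \<and> CE T (fstn (sndn (sndn c))) \<and> CE T (sndn (sndn (sndn c)))) \<or>
   (fstn c = 5 \<and> CE T (sndn (sndn c)))"

definition evalok :: "nat set \<Rightarrow> nat \<Rightarrow> nat \<Rightarrow> nat \<Rightarrow> nat \<Rightarrow> bool" where
  "evalok T c x r a \<longleftrightarrow> CE T c \<and> (
   (fstn c = 0 \<and> r = 0) \<or>
   (fstn c = 1 \<and> lenc x = 1 \<and> r = Suc (nthc x 0)) \<or>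
   (fstn c = 2 \<and> sndn (sndn c) < fstn (sndn c) \<and> lenc x = fstn (sndn c) \<and> r = nthc x (sndn (sndn c))) \<or>
   (fstn c = 3 \<and> lenc x = fstn (sndn c) \<and> lenc a = lenc (sndn (sndn (sndn c))) \<and>
      (\<forall>j<lenc a. EE T (nthc (sndn (sndn (sndn c))) j) x (nthc a j)) \<and> EE T (fstn (sndn (sndn c))) a r) \<or>
   (fstn c = 4 \<and> lenc x = Suc (fstn (sndn c)) \<and>
      ((hdc x = 0 \<and> EE T (fstn (sndn (sndn c))) (tlc x) r) \<or>
       (hdc x \<noteq> 0 \<and> EEpr T c (sndn (sndn (sndn c))) x r))) \<or>
   (fstn c = 5 \<and> lenc x = fstn (sndn c) \<and> EE T (sndn (sndn c)) (consc r x) 0 \<and>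
      (\<forall>z<r. EEnz T (sndn (sndn c)) (consc z x))))"

definition Just :: "nat set \<Rightarrow> nat \<Rightarrow> bool" where
  "Just T q \<longleftrightarrow> (fstn q = 0 \<and> codeok T (sndn q)) \<or> (fstn q = 1 \<and> evalok T (ec q) (ex q) (er q) (ea q))"

definition sound :: "nat \<Rightarrow> bool" where
  "sound q \<longleftrightarrow> (fstn q = 0 \<longrightarrow> (\<exists>f. enc f = sndn q)) \<and>
     (fstn q = 1 \<longrightarrow> (\<exists>f. enc f = ec q \<and> eval f (list_decode (ex q)) (er q)))"

lemma enc_pe: "enc Z = pe 0 0" "enc S = pe 1 0" "enc (Id n k) = pe 2 (pe n k)"
  "enc (Cn n f gs) = pe 3 (pe n (pe (enc f) (list_encode (map enc gs))))"
  "enc (Pr n f g) = pe 4 (pe n (pe (enc f) (enc g)))"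
  "enc (Mn n f) = pe 5 (pe n (enc f))"
  by (simp_all add: pe_def)

lemma list_decode_consc[simp]: "list_decode (consc x c) = x # list_decode c"
  by (metis list_decode_inverse list_encode_Cons list_encode_inverse)



lemma enc_eq_iff[simp]: "enc f = enc g \<longleftrightarrow> f = g" using enc_inj by blast
declare enc.simps[simp del] enc_pe[simp]

lemma lenc_consc[simp]: "lenc (consc a c) = Suc (lenc c)"
  by (simp add: enc_dec_len)
lemma lenc_0[simp]: "lenc 0 = 0" by (simp add: lenc_def)
lemma nthc_consc0[simp]: "nthc (consc a c) 0 = a" by (simp add: nthc_def tli_def)
lemma nthc_consc_Suc[simp]: "nthc (consc a c) (Suc i) = nthc c i" by (simp add: nthc_def tli_Suc)
declare list_encode.simps(2)[simp del] list_encode_Cons[simp]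

lemma c_decomp2: "c = pe (fstn c) (pe (fstn (sndn c)) (sndn (sndn c)))"
  by (simp add: pe_fst_snd)
lemma c_decomp3: "c = pe (fstn c) (pe (fstn (sndn c)) (pe (fstn (sndn (sndn c))) (sndn (sndn (sndn c)))))"
  by (simp add: pe_fst_snd)

lemma enc_all: "(\<forall>y\<in>set ys. \<exists>g. enc g = y) \<Longrightarrow> \<exists>gs. map enc gs = ys"
proof (induction ys)
  case (Cons y ys)
  then obtain g gs where "enc g = y" "map enc gs = ys" by auto
  then show ?case by (intro exI[of _ "g # gs"]) simp
qed simp

lemma CE_sound: "\<forall>q\<in>T. sound q \<Longrightarrow> CE T c \<Longrightarrow> \<exists>f. enc f = c"
  unfolding CE_def sound_def by (metis fstn_pe sndn_pe)

lemma EE_sound: "\<forall>q\<in>T. sound q \<Longrightarrow> EE T c x r \<Longrightarrow> \<exists>f. enc f = c \<and> eval f (list_decode x) r"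
  unfolding EE_def sound_def by auto

lemma EEnz_sound: "\<forall>q\<in>T. sound q \<Longrightarrow> EEnz T c x \<Longrightarrow> \<exists>f v. enc f = c \<and> eval f (list_decode x) (Suc v)"
  unfolding EEnz_def sound_def by (metis not0_implies_Suc)

lemma EEpr_sound: "\<forall>q\<in>T. sound q \<Longrightarrow> EEpr T c g x r \<Longrightarrow>
   \<exists>F y g'. enc F = c \<and> eval F (list_decode (consc (hdc x - 1) (tlc x))) y \<and>
     enc g' = g \<and> eval g' (list_decode (consc (hdc x - 1) (consc y (tlc x)))) r"
proof -
  assume T: "\<forall>q\<in>T. sound q" and "EEpr T c g x r"
  then obtain q where q: "q \<in> T" "fstn q = 1" "ec q = c" "ex q = consc (hdc x - 1) (tlc x)"
     "EE T g (consc (hdc x - 1) (consc (er q) (tlc x))) r" unfolding EEpr_def by blast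
  from q T obtain F where "enc F = c" "eval F (list_decode (consc (hdc x - 1) (tlc x))) (er q)"
    unfolding sound_def by auto
  moreover from EE_sound[OF T q(5)] obtain g' where
    "enc g' = g" "eval g' (list_decode (consc (hdc x - 1) (consc (er q) (tlc x)))) r" by blast
  ultimately show ?thesis by blast
qed

lemma codeok_sound:
  assumes T: "\<forall>q\<in>T. sound q" and ok: "codeok T c"
  shows "\<exists>f. enc f = c"
proof -
  note cd2 = c_decomp2[of c] and cd3 = c_decomp3[of c]
  from ok consider "c = pe 0 0" | "c = pe 1 0" | "fstn c = 2" |
     "fstn c = 3" "CE T (fstn (sndn (sndn c)))" "\<forall>j<lenc (sndn (sndn (sndn c))). CE T (nthc (sndn (sndn (sndn c))) j)" |
     "fstn c = 4" "CE T (fstn (sndn (sndn c)))" "CE T (sndn (sndn (sndn c)))" |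
     "fstn c = 5" "CE T (sndn (sndn c))"
    unfolding codeok_def by blast
  then show ?thesis
  proof cases
    case 1 then show ?thesis by (metis enc_pe(1))
  next
    case 2 then show ?thesis by (metis enc_pe(2))
  next
    case 3 then show ?thesis using cd2 by (metis enc_pe(3))
  next
    case 4
    obtain f where f: "enc f = fstn (sndn (sndn c))" using CE_sound[OF T 4(2)] by blast
    have "\<forall>y\<in>set (list_decode (sndn (sndn (sndn c)))). \<exists>g. enc g = y"
    proof
      fix y assume "y \<in> set (list_decode (sndn (sndn (sndn c))))"
      then obtain j where j: "j < length (list_decode (sndn (sndn (sndn c))))"
          "y = list_decode (sndn (sndn (sndn c))) ! j" by (auto simp: in_set_conv_nth)
      then have "j < lenc (sndn (sndn (sndn c)))" "y = nthc (sndn (sndn (sndn c))) j"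
        by (simp_all add: enc_dec_len enc_dec_nth)
      then show "\<exists>g. enc g = y" using 4(3) CE_sound[OF T] by blast
    qed
    then obtain gs where gs: "map enc gs = list_decode (sndn (sndn (sndn c)))" using enc_all by blast
    have "enc (Cn (fstn (sndn c)) f gs) = c" unfolding enc_pe f gs using 4(1) cd3 by simp
    then show ?thesis by blast
  next
    case 5
    obtain f where f: "enc f = fstn (sndn (sndn c))" using CE_sound[OF T 5(2)] by blast
    obtain g where g: "enc g = sndn (sndn (sndn c))" using CE_sound[OF T 5(3)] by blast
    have "enc (Pr (fstn (sndn c)) f g) = c" unfolding enc_pe f g using 5(1) cd3 by simp
    then show ?thesis by blast
  next
    case 6
    obtain f where f: "enc f = sndn (sndn c)" using CE_sound[OF T 6(2)] by blast
    have "enc (Mn (fstn (sndn c)) f) = c" unfolding enc_pe f using 6(1) cd2 by simp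
    then show ?thesis by blast
  qed
qed

lemma evalok_CE: "evalok T c x r a \<Longrightarrow> CE T c" unfolding evalok_def by blast
lemma evalok_0: "evalok T c x r a \<Longrightarrow> fstn c = 0 \<Longrightarrow> r = 0" unfolding evalok_def by simp
lemma evalok_1: "evalok T c x r a \<Longrightarrow> fstn c = 1 \<Longrightarrow> lenc x = 1 \<and> r = Suc (nthc x 0)"
  unfolding evalok_def by simp
lemma evalok_2: "evalok T c x r a \<Longrightarrow> fstn c = 2 \<Longrightarrow>
   sndn (sndn c) < fstn (sndn c) \<and> lenc x = fstn (sndn c) \<and> r = nthc x (sndn (sndn c))"
  unfolding evalok_def by simp
lemma evalok_3: "evalok T c x r a \<Longrightarrow> fstn c = 3 \<Longrightarrow>
   lenc x = fstn (sndn c) \<and> lenc a = lenc (sndn (sndn (sndn c))) \<and>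
      (\<forall>j<lenc a. EE T (nthc (sndn (sndn (sndn c))) j) x (nthc a j)) \<and> EE T (fstn (sndn (sndn c))) a r"
  unfolding evalok_def by simp
lemma evalok_4: "evalok T c x r a \<Longrightarrow> fstn c = 4 \<Longrightarrow>
   lenc x = Suc (fstn (sndn c)) \<and>
      ((hdc x = 0 \<and> EE T (fstn (sndn (sndn c))) (tlc x) r) \<or>
       (hdc x \<noteq> 0 \<and> EEpr T c (sndn (sndn (sndn c))) x r))"
  unfolding evalok_def by simp
lemma evalok_5: "evalok T c x r a \<Longrightarrow> fstn c = 5 \<Longrightarrow>
   lenc x = fstn (sndn c) \<and> EE T (sndn (sndn c)) (consc r x) 0 \<and>
      (\<forall>z<r. EEnz T (sndn (sndn c)) (consc z x))"
  unfolding evalok_def by simp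

lemma evalok_sound:
  assumes T: "\<forall>q\<in>T. sound q" and ok: "evalok T c x r a"
  shows "\<exists>f. enc f = c \<and> eval f (list_decode x) r"
proof -
  from ok have "CE T c" by (rule evalok_CE)
  then obtain F where F: "c = enc F" using CE_sound[OF T] by metis
  define xs where "xs = list_decode x"
  have x: "x = list_encode xs" by (simp add: xs_def)
  have lx: "lenc x = length xs" by (simp add: x)
  show ?thesis
  proof (cases F)
    case Z
    with F ok have "r = 0" using evalok_0 by simp
    then show ?thesis using F Z by (intro exI[of _ Z]) (auto intro: eval_Z)
  next
    case S
    with F ok have "lenc x = 1" "r = Suc (nthc x 0)" using evalok_1[OF ok] by simp_all
    then obtain v where "xs = [v]" "r = Suc v" using lx x by (cases xs) auto
    then show ?thesis using F S xs_def by (intro exI[of _ F]) (auto intro: eval_S)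
  next
    case (Id n k)
    with F ok have "k < n" "lenc x = n" "r = nthc x k" using evalok_2[OF ok] by simp_all
    then have "r = xs ! k" "length xs = n" "k < n" using lx x by simp_all
    then show ?thesis using F Id by (intro exI[of _ F]) (auto intro: eval_Id simp: xs_def[symmetric])
  next
    case (Cn n f gs)
    have c3: "fstn c = 3" "fstn (sndn c) = n" "fstn (sndn (sndn c)) = enc f"
      "sndn (sndn (sndn c)) = list_encode (map enc gs)" using F Cn by simp_all
    have A0: "lenc x = n \<and> lenc a = length gs \<and>
      (\<forall>j<lenc a. EE T (nthc (list_encode (map enc gs)) j) x (nthc a j)) \<and> EE T (enc f) a r"
      using evalok_3[OF ok c3(1)] unfolding c3(2-4) lenc_enc length_map .
    have A3: "\<forall>j<lenc a. EE T (enc (gs ! j)) x (nthc a j)"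
    proof (intro allI impI)
      fix j assume j: "j < lenc a"
      then have "j < length gs" using A0 by simp
      then have "nthc (list_encode (map enc gs)) j = enc (gs ! j)" by simp
      then show "EE T (enc (gs ! j)) x (nthc a j)" using A0 j by metis
    qed
    have A: "lenc x = n" "lenc a = length gs"
      "\<forall>j<lenc a. EE T (enc (gs ! j)) x (nthc a j)" "EE T (enc f) a r"
      using A0 A3 by auto
    define ys where "ys = list_decode a"
    have a: "a = list_encode ys" by (simp add: ys_def)
    have "list_all2 (\<lambda>g y. eval g xs y) gs ys"
    proof (unfold list_all2_conv_all_nth, intro conjI allI impI)
      show "length gs = length ys" using A(2) a by simp
      fix j assume j: "j < length gs"
      then obtain g' where "enc g' = enc (gs ! j)" "eval g' xs (nthc a j)"
        using EE_sound[OF T] A(2,3) xs_def by metis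
      then show "eval (gs ! j) xs (ys ! j)" using j A(2) a by (simp add: enc_eq_iff)
    qed
    moreover obtain f' where "enc f' = enc f" "eval f' ys r" using EE_sound[OF T A(4)] ys_def by blast
    ultimately have "eval (Cn n f gs) xs r" using A(1) lx by (intro eval_Cn) (auto simp: enc_eq_iff)
    then show ?thesis using F Cn xs_def by (intro exI[of _ F]) simp
  next
    case (Pr n f g)
    with F ok have A: "lenc x = Suc n"
      "(hdc x = 0 \<and> EE T (enc f) (tlc x) r) \<or> (hdc x \<noteq> 0 \<and> EEpr T c (enc g) x r)"
      using evalok_4[OF ok] by simp_all
    then obtain k ys where xs: "xs = k # ys" using lx by (cases xs) auto
    have hx: "hdc x = k" "tlc x = list_encode ys" using x xs by (simp_all add: list_encode_Cons)
    have ly: "length ys = n" using A(1) lx xs by simp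
    show ?thesis
    proof (cases k)
      case 0
      with A hx obtain f' where "enc f' = enc f" "eval f' ys r" using EE_sound[OF T] by fastforce
      then show ?thesis using F Pr xs xs_def 0 ly by (intro exI[of _ F]) (auto intro: eval_Pr0 simp: enc_eq_iff)
    next
      case (Suc k')
      with A hx have "EEpr T c (enc g) x r" by simp
      from EEpr_sound[OF T this] obtain F' y g' where
        FF: "enc F' = c" "eval F' (k' # ys) y" "enc g' = enc g" "eval g' (k' # y # ys) r"
        using hx Suc by auto
      have "F' = F" using FF(1) F enc_inj by metis
      then have "eval (Pr n f g) (k' # ys) y" "eval g (k' # y # ys) r" using FF Pr by (auto simp: enc_eq_iff)
      then have "eval (Pr n f g) (Suc k' # ys) r" using ly by (intro eval_PrS)
      then show ?thesis using F Pr xs xs_def Suc by (intro exI[of _ F]) auto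
    qed
  next
    case (Mn n f)
    with F ok have A: "lenc x = n" "EE T (enc f) (consc r x) 0" "\<forall>z<r. EEnz T (enc f) (consc z x)"
      using evalok_5[OF ok] by simp_all
    obtain f' where "enc f' = enc f" "eval f' (r # xs) 0" using EE_sound[OF T A(2)] xs_def by auto
    then have e0: "eval f (r # xs) 0" by (simp add: enc_eq_iff)
    have "\<forall>z<r. \<exists>v. eval f (z # xs) (Suc v)"
    proof (intro allI impI)
      fix z assume "z < r"
      then obtain f' v where "enc f' = enc f" "eval f' (z # xs) (Suc v)"
        using EEnz_sound[OF T] A(3) xs_def by fastforce
      then show "\<exists>v. eval f (z # xs) (Suc v)" by (auto simp: enc_eq_iff)
    qed
    then show ?thesis using F Mn e0 A(1) lx xs_def by (intro exI[of _ F]) (auto intro: eval_Mn)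
  qed
qed

lemma Just_sound: "\<forall>q\<in>T. sound q \<Longrightarrow> Just T q \<Longrightarrow> sound q"
proof -
  assume T: "\<forall>q\<in>T. sound q" and J: "Just T q"
  show "sound q" unfolding sound_def
  proof (intro conjI impI)
    assume "fstn q = 0" then have "codeok T (sndn q)" using J unfolding Just_def by simp
    then show "\<exists>f. enc f = sndn q" using codeok_sound[OF T] by blast
  next
    assume "fstn q = 1" then have "evalok T (ec q) (ex q) (er q) (ea q)" using J unfolding Just_def by simp
    then show "\<exists>f. enc f = ec q \<and> eval f (list_decode (ex q)) (er q)" using evalok_sound[OF T] by blast
  qed
qed

definition validL :: "nat list \<Rightarrow> bool" where
  "validL L \<longleftrightarrow> (\<forall>i<length L. Just (set (take i L)) (L ! i))"

lemma validL_sound: "validL L \<Longrightarrow> q \<in> set L \<Longrightarrow> sound q"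
proof -
  assume v: "validL L" and q: "q \<in> set L"
  have "\<forall>i<length L. sound (L ! i)"
  proof (intro allI)
    fix i show "i < length L \<longrightarrow> sound (L ! i)"
    proof (induction i rule: less_induct)
      case (less i)
      show ?case
      proof
        assume i: "i < length L"
        have "\<forall>q\<in>set (take i L). sound q"
          using less i by (auto simp: in_set_conv_nth)
        then show "sound (L ! i)" using Just_sound v i unfolding validL_def by blast
      qed
    qed
  qed
  then show ?thesis using q by (auto simp: in_set_conv_nth)
qed



lemma CE_mono: "T \<subseteq> T' \<Longrightarrow> CE T c \<Longrightarrow> CE T' c" unfolding CE_def by blast
lemma EE_mono: "T \<subseteq> T' \<Longrightarrow> EE T c x r \<Longrightarrow> EE T' c x r" unfolding EE_def by blast
lemma EEnz_mono: "T \<subseteq> T' \<Longrightarrow> EEnz T c x \<Longrightarrow> EEnz T' c x" unfolding EEnz_def by blast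
lemma EEpr_mono: "T \<subseteq> T' \<Longrightarrow> EEpr T c g x r \<Longrightarrow> EEpr T' c g x r"
  unfolding EEpr_def using EE_mono by blast
lemma codeok_mono: assumes "T \<subseteq> T'" "codeok T c" shows "codeok T' c"
  using assms(2) CE_mono[OF assms(1)] unfolding codeok_def by blast
lemma evalok_mono: assumes "T \<subseteq> T'" "evalok T c x r a" shows "evalok T' c x r a"
  using assms(2) CE_mono[OF assms(1)] EE_mono[OF assms(1)] EEnz_mono[OF assms(1)] EEpr_mono[OF assms(1)]
  unfolding evalok_def by blast
lemma Just_mono: assumes "T \<subseteq> T'" "Just T q" shows "Just T' q"
  using assms(2) codeok_mono[OF assms(1)] evalok_mono[OF assms(1)] unfolding Just_def by blast

lemma Just_code: "codeok T c \<Longrightarrow> Just T (pe 0 c)"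
  by (simp add: Just_def)
lemma Just_eve: "evalok T c x r a \<Longrightarrow> Just T (eve c x r a)"
  by (simp add: Just_def)

lemma validL_nil: "validL []" by (simp add: validL_def)

lemma validL_append: "validL L1 \<Longrightarrow> validL L2 \<Longrightarrow> validL (L1 @ L2)"
  unfolding validL_def
proof (intro allI impI)
  fix i assume v1: "\<forall>i<length L1. Just (set (take i L1)) (L1 ! i)"
    and v2: "\<forall>i<length L2. Just (set (take i L2)) (L2 ! i)" and i: "i < length (L1 @ L2)"
  show "Just (set (take i (L1 @ L2))) ((L1 @ L2) ! i)"
  proof (cases "i < length L1")
    case True then show ?thesis using v1 by (simp add: nth_append)
  next
    case False
    then obtain j where j: "i = length L1 + j" "j < length L2" using i by (metis add_diff_inverse_nat length_append nat_add_left_cancel_less)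
    then have "Just (set (take j L2)) (L2 ! j)" using v2 by blast
    moreover have "set (take j L2) \<subseteq> set (take i (L1 @ L2))" using j by auto
    ultimately have "Just (set (take i (L1 @ L2))) (L2 ! j)" using Just_mono by blast
    then show ?thesis using j by (simp add: nth_append)
  qed
qed

lemma validL_snoc: "validL L \<Longrightarrow> Just (set L) q \<Longrightarrow> validL (L @ [q])"
  unfolding validL_def by (auto simp: nth_append less_Suc_eq)

lemma step_eval: "validL L \<Longrightarrow> evalok (set L) c x r a \<Longrightarrow> \<exists>L'. validL L' \<and> EE (set L') c x r"
proof -
  assume "validL L" "evalok (set L) c x r a"
  then have "validL (L @ [eve c x r a])" by (metis validL_snoc Just_eve)
  moreover have "EE (set (L @ [eve c x r a])) c x r" unfolding EE_def by (intro bexI[of _ "eve c x r a"]) auto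
  ultimately show ?thesis by blast
qed

lemma step_code: "validL L \<Longrightarrow> codeok (set L) c \<Longrightarrow> \<exists>L'. validL L' \<and> CE (set L') c"
proof -
  assume "validL L" "codeok (set L) c"
  then have "validL (L @ [pe 0 c])" by (metis validL_snoc Just_code)
  moreover have "CE (set (L @ [pe 0 c])) c" unfolding CE_def by simp
  ultimately show ?thesis by blast
qed

lemma validL_collect:
  assumes "\<forall>z\<in>set zs. \<exists>L. validL L \<and> Q z (set L)"
    and mono: "\<And>z T T'. T \<subseteq> T' \<Longrightarrow> Q z T \<Longrightarrow> Q z T'"
  shows "\<exists>L. validL L \<and> (\<forall>z\<in>set zs. Q z (set L))"
  using assms(1)
proof (induction zs)
  case Nil then show ?case using validL_nil by auto
next
  case (Cons z zs)
  then obtain L1 L2 where "validL L1" "Q z (set L1)" "validL L2" "\<forall>z\<in>set zs. Q z (set L2)" by auto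
  moreover have "Q z (set (L1 @ L2))" using mono[of "set L1" "set (L1 @ L2)"] \<open>Q z (set L1)\<close> by auto
  moreover have "\<forall>z\<in>set zs. Q z (set (L1 @ L2))" using mono[of "set L2" "set (L1 @ L2)"] \<open>\<forall>z\<in>set zs. Q z (set L2)\<close> by auto
  ultimately show ?case using validL_append[of L1 L2] by (intro exI[of _ "L1 @ L2"]) auto
qed

lemma code_complete: "\<exists>L. validL L \<and> CE (set L) (enc f)"
proof (induction f)
  case Z then show ?case by (intro step_code[OF validL_nil]) (simp add: codeok_def)
next
  case S then show ?case by (intro step_code[OF validL_nil]) (simp add: codeok_def)
next
  case (Id n k) then show ?case by (intro step_code[OF validL_nil]) (simp add: codeok_def)
next
  case (Cn n f gs)
  obtain L1 where L1: "validL L1" "CE (set L1) (enc f)" using Cn.IH(1) by blast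
  obtain L2 where L2: "validL L2" "\<forall>g\<in>set gs. CE (set L2) (enc g)"
    using validL_collect[of gs "\<lambda>g T. CE T (enc g)"] Cn.IH(2) CE_mono by blast
  have "codeok (set (L1 @ L2)) (enc (Cn n f gs))"
  proof -
    have "CE (set (L1 @ L2)) (enc f)" using L1(2) CE_mono[of "set L1" "set (L1 @ L2)"] by auto
    moreover have "\<forall>j<length gs. CE (set (L1 @ L2)) (enc (gs ! j))"
      using L2(2) CE_mono[of "set L2" "set (L1 @ L2)"] by auto
    ultimately show ?thesis unfolding codeok_def by simp
  qed
  then show ?case using validL_append[OF L1(1) L2(1)] step_code by blast
next
  case (Pr n f g)
  obtain L1 where L1: "validL L1" "CE (set L1) (enc f)" using Pr.IH(1) by blast
  obtain L2 where L2: "validL L2" "CE (set L2) (enc g)" using Pr.IH(2) by blast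
  have "CE (set (L1 @ L2)) (enc f)" "CE (set (L1 @ L2)) (enc g)"
    using L1(2) L2(2) CE_mono[of "set L1" "set (L1 @ L2)"] CE_mono[of "set L2" "set (L1 @ L2)"] by auto
  then have "codeok (set (L1 @ L2)) (enc (Pr n f g))"
    unfolding codeok_def by simp
  then show ?case using validL_append[OF L1(1) L2(1)] step_code by blast
next
  case (Mn n f)
  obtain L1 where L1: "validL L1" "CE (set L1) (enc f)" using Mn.IH by blast
  have "codeok (set L1) (enc (Mn n f))"
    unfolding codeok_def using L1(2) by simp
  then show ?case using L1(1) step_code by blast
qed



lemma EE_I: "eve c x r a \<in> T \<Longrightarrow> EE T c x r"
  unfolding EE_def by (intro bexI[of _ "eve c x r a"]) auto

lemma evok_Z: "CE T (enc Z) \<Longrightarrow> evalok T (enc Z) x 0 a"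
  unfolding evalok_def by simp
lemma evok_S: "CE T (enc S) \<Longrightarrow> evalok T (enc S) (list_encode [v]) (Suc v) a"
  unfolding evalok_def by simp
lemma evok_Id: "CE T (enc (Id n k)) \<Longrightarrow> k < n \<Longrightarrow> length xs = n \<Longrightarrow>
   evalok T (enc (Id n k)) (list_encode xs) (xs ! k) a"
  unfolding evalok_def by simp
lemma evok_Cn: "CE T (enc (Cn n f gs)) \<Longrightarrow> length xs = n \<Longrightarrow> length ys = length gs \<Longrightarrow>
   \<forall>j<length gs. EE T (enc (gs ! j)) (list_encode xs) (ys ! j) \<Longrightarrow> EE T (enc f) (list_encode ys) r \<Longrightarrow>
   evalok T (enc (Cn n f gs)) (list_encode xs) r (list_encode ys)"
  unfolding evalok_def by simp
lemma evok_Pr0: "CE T (enc (Pr n f g)) \<Longrightarrow> length xs = n \<Longrightarrow> EE T (enc f) (list_encode xs) r \<Longrightarrow>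
   evalok T (enc (Pr n f g)) (list_encode (0 # xs)) r a"
  unfolding evalok_def by simp
lemma evok_PrS:
  assumes "CE T (enc (Pr n f g))" "length xs = n" "EE T (enc (Pr n f g)) (list_encode (k # xs)) y"
    "EE T (enc g) (list_encode (k # y # xs)) r"
  shows "evalok T (enc (Pr n f g)) (list_encode (Suc k # xs)) r a"
proof -
  from assms(3) obtain q where q: "q \<in> T" "fstn q = 1" "ec q = enc (Pr n f g)" "ex q = consc k (list_encode xs)" "er q = y"
    unfolding EE_def by auto
  have "EEpr T (enc (Pr n f g)) (enc g) (list_encode (Suc k # xs)) r"
    unfolding EEpr_def using q assms(4) by (intro bexI[of _ q]) auto
  then show ?thesis using assms(1,2) unfolding evalok_def by simp
qed
lemma evok_Mn:
  assumes "CE T (enc (Mn n f))" "length xs = n" "EE T (enc f) (list_encode (r # xs)) 0"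
    "\<forall>z<r. \<exists>v. EE T (enc f) (list_encode (z # xs)) (Suc v)"
  shows "evalok T (enc (Mn n f)) (list_encode xs) r a"
proof -
  have "\<forall>z<r. EEnz T (enc f) (consc z (list_encode xs))"
    using assms(4) unfolding EE_def EEnz_def by fastforce
  then show ?thesis using assms(1-3) unfolding evalok_def by simp
qed

lemma step_eval': "validL L \<Longrightarrow> evalok (set L) c x r a \<Longrightarrow> \<exists>L'. validL L' \<and> EE (set L') c x r"
  by (rule step_eval)

lemma EE_Un1: "EE T c x r \<Longrightarrow> EE (T \<union> T') c x r" using EE_mono[of T] by auto
lemma EE_Un2: "EE T' c x r \<Longrightarrow> EE (T \<union> T') c x r" using EE_mono[of T'] by auto
lemma CE_Un1: "CE T c \<Longrightarrow> CE (T \<union> T') c" using CE_mono[of T] by auto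
lemma CE_Un2: "CE T' c \<Longrightarrow> CE (T \<union> T') c" using CE_mono[of T'] by auto
lemma EE_app1: "EE (set L1) c x r \<Longrightarrow> EE (set (L1 @ L2)) c x r" using EE_mono[of "set L1"] by auto
lemma EE_app2: "EE (set L2) c x r \<Longrightarrow> EE (set (L1 @ L2)) c x r" using EE_mono[of "set L2"] by auto
lemma CE_app1: "CE (set L1) c \<Longrightarrow> CE (set (L1 @ L2)) c" using CE_mono[of "set L1"] by auto
lemma CE_app2: "CE (set L2) c \<Longrightarrow> CE (set (L1 @ L2)) c" using CE_mono[of "set L2"] by auto

lemma eval_complete: "eval f xs y \<Longrightarrow> \<exists>L. validL L \<and> EE (set L) (enc f) (list_encode xs) y"
proof (induction rule: eval.induct)
  case (eval_Z xs)
  obtain L where "validL L" "CE (set L) (enc Z)" using code_complete by blast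
  then show ?case using step_eval evok_Z by blast
next
  case (eval_S x)
  obtain L where "validL L" "CE (set L) (enc S)" using code_complete by blast
  then show ?case using step_eval evok_S by blast
next
  case (eval_Id k n xs)
  obtain L where "validL L" "CE (set L) (enc (Id n k))" using code_complete by blast
  then show ?case using step_eval evok_Id eval_Id by blast
next
  case (eval_Cn xs n gs ys f z)
  obtain L1 where L1: "validL L1" "CE (set L1) (enc (Cn n f gs))" using code_complete by blast
  have "\<forall>p\<in>set (zip gs ys). \<exists>L. validL L \<and> EE (set L) (enc (fst p)) (list_encode xs) (snd p)"
    using eval_Cn.IH(1) by (auto simp: list_all2_iff)
  then obtain L2 where L2: "validL L2" "\<forall>p\<in>set (zip gs ys). EE (set L2) (enc (fst p)) (list_encode xs) (snd p)"
    using validL_collect[of "zip gs ys" "\<lambda>p T. EE T (enc (fst p)) (list_encode xs) (snd p)"] EE_mono by blast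
  obtain L3 where L3: "validL L3" "EE (set L3) (enc f) (list_encode ys) z" using eval_Cn.IH(2) by blast
  have len: "length ys = length gs" using eval_Cn.IH(1) by (simp add: list_all2_lengthD)
  have "\<forall>j<length gs. EE (set L2) (enc (gs ! j)) (list_encode xs) (ys ! j)"
  proof (intro allI impI)
    fix j assume "j < length gs"
    then have "(gs ! j, ys ! j) \<in> set (zip gs ys)" using len by (auto simp: set_zip)
    then show "EE (set L2) (enc (gs ! j)) (list_encode xs) (ys ! j)" using L2(2) by (metis fst_conv snd_conv)
  qed
  then have Ej: "\<forall>j<length gs. EE (set (L1 @ (L2 @ L3))) (enc (gs ! j)) (list_encode xs) (ys ! j)"
    by (intro allI impI EE_app2[OF EE_app1]) blast
  have C: "CE (set (L1 @ (L2 @ L3))) (enc (Cn n f gs))" by (rule CE_app1[OF L1(2)])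
  have E3: "EE (set (L1 @ (L2 @ L3))) (enc f) (list_encode ys) z" using EE_app2[OF EE_app2[OF L3(2)]] .
  have "evalok (set (L1 @ (L2 @ L3))) (enc (Cn n f gs)) (list_encode xs) z (list_encode ys)"
    by (rule evok_Cn[OF C eval_Cn.hyps(1) len Ej E3])
  then show ?case using step_eval[OF validL_append[OF L1(1) validL_append[OF L2(1) L3(1)]]] by blast
next
  case (eval_Pr0 xs n f y g)
  obtain L1 where L1: "validL L1" "CE (set L1) (enc (Pr n f g))" using code_complete by blast
  obtain L2 where L2: "validL L2" "EE (set L2) (enc f) (list_encode xs) y" using eval_Pr0.IH by blast
  have "evalok (set (L1 @ L2)) (enc (Pr n f g)) (list_encode (0 # xs)) y 0"
    by (rule evok_Pr0[OF CE_app1[OF L1(2)] eval_Pr0.hyps(1) EE_app2[OF L2(2)]])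
  then show ?case using step_eval[OF validL_append[OF L1(1) L2(1)]] by blast
next
  case (eval_PrS xs n f g k y z)
  obtain L1 where L1: "validL L1" "CE (set L1) (enc (Pr n f g))" using code_complete by blast
  obtain L2 where L2: "validL L2" "EE (set L2) (enc (Pr n f g)) (list_encode (k # xs)) y" using eval_PrS.IH(1) by blast
  obtain L3 where L3: "validL L3" "EE (set L3) (enc g) (list_encode (k # y # xs)) z" using eval_PrS.IH(2) by blast
  have "evalok (set (L1 @ (L2 @ L3))) (enc (Pr n f g)) (list_encode (Suc k # xs)) z 0"
    by (rule evok_PrS[OF CE_app1[OF L1(2)] eval_PrS.hyps(1) EE_app2[OF EE_app1[OF L2(2)]] EE_app2[OF EE_app2[OF L3(2)]]])
  then show ?case using step_eval[OF validL_append[OF L1(1) validL_append[OF L2(1) L3(1)]]] by blast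
next
  case (eval_Mn xs n f y)
  obtain L1 where L1: "validL L1" "CE (set L1) (enc (Mn n f))" using code_complete by blast
  obtain L2 where L2: "validL L2" "EE (set L2) (enc f) (list_encode (y # xs)) 0" using eval_Mn.IH(1) by blast
  have "\<forall>z\<in>set [0..<y]. \<exists>L. validL L \<and> (\<exists>v. EE (set L) (enc f) (list_encode (z # xs)) (Suc v))"
    using eval_Mn.IH(2) by fastforce
  then obtain L3 where L3: "validL L3" "\<forall>z\<in>set [0..<y]. \<exists>v. EE (set L3) (enc f) (list_encode (z # xs)) (Suc v)"
    using validL_collect[of "[0..<y]" "\<lambda>z T. \<exists>v. EE T (enc f) (list_encode (z # xs)) (Suc v)"] EE_mono by blast
  have "evalok (set (L1 @ (L2 @ L3))) (enc (Mn n f)) (list_encode xs) y 0"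
  proof (rule evok_Mn[OF CE_app1[OF L1(2)] eval_Mn.hyps(1) EE_app2[OF EE_app1[OF L2(2)]]])
    show "\<forall>z<y. \<exists>v. EE (set (L1 @ L2 @ L3)) (enc f) (list_encode (z # xs)) (Suc v)"
      using L3(2) EE_app2[of L3 _ _ _ L2] EE_app2[of "L2 @ L3" _ _ _ L1] by fastforce
  qed
  then show ?case using step_eval[OF validL_append[OF L1(1) validL_append[OF L2(1) L3(1)]]] by blast
qed



definition validn :: "nat \<Rightarrow> bool" where
  "validn d \<longleftrightarrow> (\<forall>i<lenc d. Just (nthc d ` {..<i}) (nthc d i))"

lemma validn_enc: "validn (list_encode L) = validL L"
proof -
  have "nthc (list_encode L) ` {..<i} = set (take i L)" if "i < length L" for i
  proof -
    have "nthc (list_encode L) ` {..<i} = (!) L ` {0..<i}"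
      using that by (intro image_cong) auto
    also have "\<dots> = set (take i L)" using that by (simp add: nth_image)
    finally show ?thesis .
  qed
  then show ?thesis unfolding validn_def validL_def by simp
qed

definition chkK :: "nat \<Rightarrow> nat \<Rightarrow> bool" where
  "chkK t c \<longleftrightarrow> validn t \<and> (\<exists>i<lenc t. fstn (nthc t i) = 1 \<and> ec (nthc t i) = c \<and> ex (nthc t i) = consc c 0)"

definition Kset :: "nat set" where "Kset = {c. \<exists>f. enc f = c \<and> (\<exists>y. eval f [c] y)}"

lemma K_iff: "(\<exists>t. chkK t c) \<longleftrightarrow> c \<in> Kset"
proof
  assume "\<exists>t. chkK t c"
  then obtain t i where t: "validn t" "i < lenc t" "fstn (nthc t i) = 1" "ec (nthc t i) = c" "ex (nthc t i) = consc c 0"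
    unfolding chkK_def by blast
  define L where "L = list_decode t"
  have tL: "t = list_encode L" by (simp add: L_def)
  have "validL L" using t(1) validn_enc tL by simp
  moreover have "nthc t i \<in> set L" using t(2) tL by simp
  ultimately have "sound (nthc t i)" by (rule validL_sound)
  then show "c \<in> Kset" using t unfolding sound_def Kset_def by auto
next
  assume "c \<in> Kset"
  then obtain f y where f: "enc f = c" "eval f [c] y" unfolding Kset_def by blast
  obtain L where L: "validL L" "EE (set L) (enc f) (list_encode [c]) y" using eval_complete[OF f(2)] by blast
  then obtain q where q: "q \<in> set L" "fstn q = 1" "ec q = c" "ex q = consc c 0" unfolding EE_def using f by auto
  then obtain i where i: "i < length L" "L ! i = q" by (metis in_set_conv_nth)
  have "chkK (list_encode L) c" unfolding chkK_def validn_enc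
    using L(1) q i by (intro conjI exI[of _ i]) auto
  then show "\<exists>t. chkK t c" by blast
qed

lemma bex_image_lt: "(\<exists>q\<in>f ` {..<i}. P q) = (\<exists>j<i. P (f j))" by auto
lemma mem_image_lt: "(x \<in> f ` {..<i}) = (\<exists>j<i. f j = x)" by auto

lemma prfp_chkK: "prfp 2 (\<lambda>e. chkK (e 0) (e 1))"
  unfolding chkK_def validn_def Just_def codeok_def evalok_def CE_def EE_def EEnz_def EEpr_def
    ec_def ex_def er_def ea_def bex_image_lt mem_image_lt
  by (intro prf_I | simp)+



primrec cp :: "nat \<Rightarrow> recf" where
  "cp 0 = Z" | "cp (Suc b) = Cn 1 S [cp b]"

lemma eval_cp: "eval (cp b) [x] b"
proof (induction b)
  case 0 then show ?case by (simp add: eval_Z)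
next
  case (Suc b)
  have "list_all2 (\<lambda>g y. eval g [x] y) [cp b] [b]" using Suc by simp
  then show ?case by (auto intro: eval_Cn eval_S)
qed

definition ccG :: "nat \<Rightarrow> nat" where "ccG c = pe 3 (pe 1 (pe (pe 1 0) (consc c 0)))"
definition cc :: "nat \<Rightarrow> nat" where "cc b = enc (cp b)"

lemma cc_simps: "cc 0 = pe 0 0" "cc (Suc b) = ccG (cc b)"
  by (simp_all add: cc_def ccG_def)

lemma tri_less: "m < m' \<Longrightarrow> triangle m < triangle m'"
  by (rule lift_Suc_mono_less[of triangle]) auto
lemma tri_le: "m \<le> m' \<Longrightarrow> triangle m \<le> triangle m'"
  by (rule lift_Suc_mono_le[of triangle]) auto

lemma pe_mono2: "b < b' \<Longrightarrow> pe a b < pe a b'"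
proof -
  assume "b < b'"
  then have "triangle (a + b) < triangle (a + b')" by (intro tri_less) simp
  then show ?thesis by (simp add: pe_def prod_encode_def)
qed

lemma pe_ge2: "b \<le> pe a b" unfolding pe_def by (rule le_prod_encode_2)
lemma pe_ge1: "a \<le> pe a b" unfolding pe_def by (rule le_prod_encode_1)

lemma consc_mono1: "a < a' \<Longrightarrow> consc a c < consc a' c"
proof -
  assume "a < a'"
  have "triangle (a + c) \<le> triangle (a' + c)" using \<open>a < a'\<close> by (intro tri_le) simp
  then have "pe a c < pe a' c" using \<open>a < a'\<close> unfolding pe_def prod_encode_def
    by simp
  then show ?thesis by (simp add: consc_def)
qed
lemma consc_mono2: "c < c' \<Longrightarrow> consc a c < consc a c'"
  by (simp add: consc_def pe_mono2)

lemma cc_less: "cc b < cc (Suc b)"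
proof -
  have "cc b < consc (cc b) 0" using pe_ge1[of "cc b" 0] by (simp add: consc_def)
  also have "\<dots> \<le> ccG (cc b)" unfolding ccG_def
    by (meson order_trans pe_ge2)
  finally show ?thesis by (simp add: cc_simps)
qed

lemma cc_mono: "strict_mono cc" using cc_less strict_mono_Suc_iff by blast

lemma prfe_cc1: "prfe 1 (\<lambda>e. cc (e 0))"
proof -
  have "prfe (Suc 0) (\<lambda>e. PR (\<lambda>e. pe 0 0) (\<lambda>e. ccG (e 1)) (e 0) (\<lambda>i. e (Suc i)))"
    unfolding ccG_def by (intro prfe_PR prf_I | simp)+
  moreover have "PR (\<lambda>e. pe 0 0) (\<lambda>e. ccG (e 1)) x e = cc x" for x e
    by (induction x) (simp_all add: cc_simps)
  ultimately show ?thesis by (simp add: prfe_cong)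
qed
lemma prfe_cc[prf_I]: "prfe n a \<Longrightarrow> prfe n (\<lambda>e. cc (a e))"
  by (rule prfe_comp1[OF prfe_cc1])

definition sp :: "nat \<Rightarrow> nat \<Rightarrow> nat" where
  "sp p j = pe 3 (pe 1 (pe p (consc (cc p) (consc (cc j) (consc (pe 2 (pe 1 0)) 0)))))"

lemma enc_sp: "enc (Cn 1 R [cp (enc R), cp j, Id 1 0]) = sp (enc R) j"
  by (simp add: sp_def cc_def)

lemma prfe_sp[prf_I]: "prfe n a \<Longrightarrow> prfe n b \<Longrightarrow> prfe n (\<lambda>e. sp (a e) (b e))"
  unfolding sp_def by (intro prf_I)

lemma sp_mono: "strict_mono (sp p)"
  unfolding strict_mono_def sp_def
  by (intro allI impI pe_mono2 consc_mono2 consc_mono1 strict_monoD[OF cc_mono])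

lemma sp_ge: "j \<le> sp p j" using sp_mono strict_mono_imp_increasing by blast

lemma Mn_halt:
  assumes H: "\<forall>env. eval H (map env [0..<Suc n]) (h env)"
  shows "(\<exists>y. eval (Mn n H) (map env [0..<n]) y) \<longleftrightarrow> (\<exists>t. h (case_nat t env) = 0)"
proof -
  have mp: "map (case_nat t env) [0..<Suc n] = t # map env [0..<n]" for t
    by (simp only: map_upt_Suc0 nat.case)
  have Ht: "eval H (t # map env [0..<n]) (h (case_nat t env))" for t
    using H mp by metis
  show ?thesis
  proof
    assume "\<exists>y. eval (Mn n H) (map env [0..<n]) y"
    then obtain y where "eval (Mn n H) (map env [0..<n]) y" by blast
    then have "eval H (y # map env [0..<n]) 0" by (rule evMnE)
    then have "h (case_nat y env) = 0" using Ht[of y] eval_det by metis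
    then show "\<exists>t. h (case_nat t env) = 0" by blast
  next
    assume "\<exists>t. h (case_nat t env) = 0"
    then have ex: "\<exists>t. h (case_nat t env) = 0" .
    define y where "y = (LEAST t. h (case_nat t env) = 0)"
    have y0: "h (case_nat y env) = 0" unfolding y_def using ex by (rule LeastI_ex)
    have "\<forall>z<y. \<exists>v. eval H (z # map env [0..<n]) (Suc v)"
    proof (intro allI impI)
      fix z assume "z < y"
      then have "h (case_nat z env) \<noteq> 0" unfolding y_def using not_less_Least by blast
      then obtain v where "h (case_nat z env) = Suc v" using not0_implies_Suc by blast
      then show "\<exists>v. eval H (z # map env [0..<n]) (Suc v)" using Ht[of z] by metis
    qed
    moreover have "eval H (y # map env [0..<n]) 0" using Ht[of y] y0 by simp
    ultimately have "eval (Mn n H) (map env [0..<n]) y" by (intro eval_Mn) auto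
    then show "\<exists>y. eval (Mn n H) (map env [0..<n]) y" by blast
  qed
qed



lemma prfp_chkK_comp[prf_I]: "prfe n a \<Longrightarrow> prfe n b \<Longrightarrow> prfp n (\<lambda>e. chkK (a e) (b e))"
  using prfe_comp2[OF prfp_chkK[unfolded prfp_def]] unfolding prfp_def by blast

definition hR :: "(nat \<Rightarrow> nat) \<Rightarrow> nat" where
  "hR e = (if \<exists>j<Suc (e 3). e 2 < j \<and> e 3 = sp (e 1) j \<and> chkK (e 0) j then 0 else 1)"

lemma prfe_hR: "prfe 4 hR"
proof -
  have "prfe 4 (\<lambda>e. if \<exists>j<Suc (e 3). e 2 < j \<and> e 3 = sp (e 1) j \<and> chkK (e 0) j then 0 else 1)"
    by (intro prf_I | simp)+
  then show ?thesis unfolding hR_def[abs_def] .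
qed

definition HR :: recf where "HR = (SOME H. \<forall>env. eval H (map env [0..<4]) (hR env))"
lemma HR: "\<forall>env. eval HR (map env [0..<Suc 3]) (hR env)"
  using someI_ex[OF prfe_hR[unfolded prfe_def]] unfolding HR_def by simp

definition R :: recf where "R = Mn 3 HR"

lemma haltR: "(\<exists>y. eval R [p, k, x] y) \<longleftrightarrow> (\<exists>j<Suc x. k < j \<and> x = sp p j \<and> j \<in> Kset)"
proof -
  define env where "env = (\<lambda>i::nat. [p, k, x] ! i)"
  have me: "map env [0..<3] = [p, k, x]" by (simp add: env_def numeral_3_eq_3)
  have "(\<exists>y. eval R [p, k, x] y) \<longleftrightarrow> (\<exists>t. hR (case_nat t env) = 0)"
    using Mn_halt[OF HR, of env] unfolding R_def me .
  also have "\<dots> \<longleftrightarrow> (\<exists>t. \<exists>j<Suc x. k < j \<and> x = sp p j \<and> chkK t j)"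
    apply (simp add: hR_def env_def numeral_3_eq_3 numeral_2_eq_2)
    apply blast
    done
  also have "\<dots> \<longleftrightarrow> (\<exists>j<Suc x. k < j \<and> x = sp p j \<and> j \<in> Kset)"
    using K_iff by blast
  finally show ?thesis .
qed

definition r :: nat where "r = enc R"
definition g :: "nat \<Rightarrow> nat" where "g k = sp r k"
definition PK :: "nat \<Rightarrow> recf" where "PK k = Cn 1 R [cp r, cp k, Id 1 0]"

lemma enc_PK: "enc (PK k) = g k"
  unfolding PK_def g_def r_def by (rule enc_sp)

lemma eval_PK: "eval (PK k) [x] y \<longleftrightarrow> eval R [r, k, x] y"
proof
  assume "eval (PK k) [x] y"
  then obtain ys where ys: "list_all2 (\<lambda>g. eval g [x]) [cp r, cp k, Id 1 0] ys" "eval R ys y"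
    unfolding PK_def by (rule evCnE)
  have "eval (Id 1 0) [x] x" using eval_Id[of 0 1 "[x]"] by simp
  then have "ys = [r, k, x]" using ys(1) eval_cp eval_det
    by (auto simp: list_all2_Cons1)
  then show "eval R [r, k, x] y" using ys(2) by simp
next
  assume "eval R [r, k, x] y"
  moreover have "eval (Id 1 0) [x] x" using eval_Id[of 0 1 "[x]"] by simp
  ultimately show "eval (PK k) [x] y" unfolding PK_def
    by (intro eval_Cn[where ys="[r, k, x]"]) (auto simp: eval_cp)
qed

lemma psi_g: "psi (g k) x y \<longleftrightarrow> eval (PK k) [x] y"
  unfolding psi_def using enc_PK enc_inj by metis

lemma W_g: "W (g k) = {g j | j. j \<in> Kset \<and> k < j}"
proof -
  have "x \<in> W (g k) \<longleftrightarrow> (\<exists>y. eval R [r, k, x] y)" for x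
    unfolding W_def using psi_g eval_PK by auto
  also have "\<dots> x \<longleftrightarrow> (\<exists>j<Suc x. k < j \<and> x = sp r j \<and> j \<in> Kset)" for x
    by (rule haltR)
  also have "(\<exists>j<Suc x. k < j \<and> x = sp r j \<and> j \<in> Kset) \<longleftrightarrow> (\<exists>j. j \<in> Kset \<and> k < j \<and> x = g j)" for x
    unfolding g_def using sp_ge less_Suc_eq_le by blast
  finally show ?thesis by blast
qed

lemma g_mono: "strict_mono g" unfolding g_def using sp_mono by (simp add: strict_mono_def)

lemma cc_K: "cc b \<in> Kset"
  unfolding Kset_def cc_def using eval_cp by blast

lemma K_inf: "infinite Kset"
proof -
  have "inj cc" using cc_mono strict_mono_imp_inj_on by blast
  then have "infinite (range cc)" by (rule range_inj_infinite)
  moreover have "range cc \<subseteq> Kset" using cc_K by blast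
  ultimately show ?thesis using infinite_super by blast
qed

lemma prfe_g[prf_I]: "prfe n a \<Longrightarrow> prfe n (\<lambda>e. g (a e))"
  unfolding g_def by (intro prf_I)



theorem mainTheorem5:
  shows "\<exists>e :: nat \<Rightarrow> nat. strict_mono e \<and> (\<forall>n. W (e n) = {e m | m. m > n}) \<and> \<not> computable e"
proof -
  define a where "a = enumerate Kset"
  have a_mono: "strict_mono a" unfolding a_def using strict_mono_enumerate[OF K_inf] .
  have a_range: "range a = Kset" unfolding a_def using range_enumerate[OF K_inf] .
  define e where "e = (\<lambda>n. g (a n))"
  have e_mono: "strict_mono e" using a_mono g_mono unfolding e_def strict_mono_def by blast
  have g_inj: "g x = g y \<longleftrightarrow> x = y" for x y using g_mono strict_mono_eq by blast
  have We: "W (e n) = {e m | m. m > n}" for n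
  proof -
    have "W (e n) = {g j | j. j \<in> Kset \<and> a n < j}" unfolding e_def by (rule W_g)
    also have "\<dots> = {e m | m. m > n}"
    proof (intro set_eqI iffI)
      fix x assume "x \<in> {g j | j. j \<in> Kset \<and> a n < j}"
      then obtain j where j: "x = g j" "j \<in> Kset" "a n < j" by blast
      then obtain m where "j = a m" using a_range by blast
      then show "x \<in> {e m | m. m > n}" using j a_mono unfolding e_def
        by (auto simp: strict_mono_less)
    next
      fix x assume "x \<in> {e m | m. m > n}"
      then obtain m where m: "x = e m" "m > n" by blast
      have "a m \<in> Kset" using a_range by blast
      moreover have "a n < a m" using m(2) a_mono by (simp add: strict_mono_less)
      ultimately show "x \<in> {g j | j. j \<in> Kset \<and> a n < j}" using m(1) unfolding e_def by blast
    qed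
    finally show ?thesis .
  qed
  have nc: "\<not> computable e"
  proof
    assume "computable e"
    then obtain E where E: "\<forall>n. eval E [n] (e n)" unfolding computable_def by blast
    have pe1: "prfe 1 (\<lambda>env. e (env 0))" unfolding prfe_def by (intro exI[of _ E]) (simp add: E)
    have Ecomp: "prfe n b \<Longrightarrow> prfe n (\<lambda>env. e (b env))" for n b by (rule prfe_comp1[OF pe1])
    define hD where "hD = (\<lambda>env. of_bool (\<exists>m<Suc (g (env (1::nat))). e m = g (env 1)) :: nat)"
    have "prfe 2 hD" unfolding hD_def by (intro prf_I Ecomp | simp)+
    then obtain H2 where H2': "\<forall>env. eval H2 (map env [0..<2]) (hD env)" unfolding prfe_def by blast
    have H2: "\<forall>env. eval H2 (map env [0..<Suc 1]) (hD env)" using H2' by (simp add: numeral_2_eq_2)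
    have claim: "(\<exists>m<Suc (g x). e m = g x) \<longleftrightarrow> x \<in> Kset" for x
    proof
      assume "\<exists>m<Suc (g x). e m = g x"
      then obtain m where "e m = g x" by blast
      then have "a m = x" unfolding e_def using g_inj by blast
      then show "x \<in> Kset" using a_range by blast
    next
      assume "x \<in> Kset"
      then obtain m where m: "x = a m" using a_range by (metis rangeE)
      have "m \<le> e m" using e_mono strict_mono_imp_increasing by blast
      then show "\<exists>m<Suc (g x). e m = g x" using m unfolding e_def by (intro exI[of _ m]) auto
    qed
    define D where "D = Mn 1 H2"
    have haltD: "(\<exists>y. eval D [x] y) \<longleftrightarrow> x \<notin> Kset" for x
    proof -
      have "(\<exists>y. eval D (map (\<lambda>i. [x] ! i) [0..<1]) y) \<longleftrightarrow> (\<exists>t. hD (case_nat t (\<lambda>i. [x] ! i)) = 0)"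
        unfolding D_def by (rule Mn_halt[OF H2])
      also have "\<dots> \<longleftrightarrow> x \<notin> Kset" unfolding hD_def using claim by simp
      finally show ?thesis by simp
    qed
    have "enc D \<in> Kset \<longleftrightarrow> (\<exists>y. eval D [enc D] y)" unfolding Kset_def using enc_inj by blast
    then show False using haltD by blast
  qed
  show ?thesis using e_mono We nc by blast
qed

end
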